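(* For $\vec a\in\mathcal M$, let $g:T^*_{\vec a}\mathcal M\to T_{\vec a}\mathcal M$, $g(\vec\omega)=C_E(\vec\omega)$, and $(\vec\omega_1,\vec\omega_2)_g=\langle\vec\omega_1,g(\vec\omega_2)\rangle$. Then $(\,,)_g$ is symmetric, and for $\vec\omega_\nu=(\omega_\nu,\hat\omega_\nu)$, $(\vec\omega_1,\vec\omega_2)_g=\frac1{2\pi\mathrm i}\sum_{j=1}^m\oint_{\gamma_j}\big((\omega_1a'+\hat\omega_1\hat a')_+(a\omega_2+\hat a\hat\omega_2)_-+(\omega_2a'+\hat\omega_2\hat a')_+(a\omega_1+\hat a\hat\omega_1)_-\big)dz-\frac1{2\pi\mathrm i}\sum_{j=1}^m\oint_{\gamma_j}(\omega_1\omega_2aa'+\omega_1\hat\omega_2a\hat a'+\omega_2\hat\omega_1a\hat a'+\hat\omega_1\hat\omega_2\hat a\hat a')dz+\frac1{n_0}\frac1{(2\pi\mathrm i)^2}\Big(\sum_{j=1}^m\oint_{\gamma_j}(a'\omega_1+\hat a'\hat\omega_1)dz\Big)\Big(\sum_{j=1}^m\oint_{\gamma_j}(a'\omega_2+\hat a'\hat\omega_2)dz\Big)$.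
   Context: Fix $m\ge1$, positive integers $n_0,\dots,n_m$, nonzero integers $d_1,\dots,d_m$; $D_1,\dots,D_m\subset\mathbb C$ pairwise disjoint closed disks, $\gamma_i=\partial D_i$ positively oriented, $\mathbf D^{int}=\bigcup(D_i\setminus\gamma_i)$, $\mathbf D^{ext}=\mathbb P^1\setminus\bigcup D_i$; $\mathcal H$ = germs of functions holomorphic near $\bigcup\gamma_i$; $f=f_++f_-$, $f_+(z)=\frac1{2\pi\mathrm i}\sum_s\oint_{\gamma_s}\frac{f(p)}{p-z}dp$ ($z$ inside), $f_-=-(\text{same})$ ($z$ outside), $f_-(\infty)=0$. $\mathcal M$: pairs $\vec a=(a,\hat a)\in\mathcal H\times\mathcal H$, $a$ meromorphic on $\mathbf D^{ext}$, only pole $\infty$, $a=z^{n_0}+a_{n_0-2}z^{n_0-2}+\cdots$; $\hat a$ meromorphic on $\mathbf D^{int}$, only poles $\varphi_j\in D_j\setminus\gamma_j$, $\hat a=\hat a_{j,-n_j}(z-\varphi_j)^{-n_j}+\cdots$, $\hat a_{j,-n_j}\ne0$; $\zeta=a-\hat a=w_j^{d_j}$ on $\gamma_j$, $w_j$ holomorphic near $\gamma_j$, $w_j'\ne0$, $w_j(\gamma_j)$ winding once about $0$. Tangent vectors $X\leftrightarrow(\partial_Xa,\partial_X\hat a)$; $'=\partial_z$. $T^*_{\vec a}\mathcal M=(\mathcal H\times\mathcal H)/\ker\eta$ where $\eta(\omega,\hat\omega)=(a'(\omega+\hat\omega)_--(\omega a'+\hat\omega\hat a')_-,-\hat a'(\omega+\hat\omega)_++(\omega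 a'+\hat\omega\hat a')_+)$, with pairing $\langle(\omega,\hat\omega),X\rangle=\frac1{2\pi\mathrm i}\sum_s\oint_{\gamma_s}(\omega\partial_Xa+\hat\omega\partial_X\hat a)dz$. For $\vec\xi=(\xi,\hat\xi)\in T_{\vec a}\mathcal M$, $C_{\vec\xi}(\omega,\hat\omega)=(a'(\omega\xi+\hat\omega\hat\xi)_--\xi(\omega a'+\hat\omega\hat a')_-,\,-\hat a'(\omega\xi+\hat\omega\hat\xi)_++\hat\xi(\omega a'+\hat\omega\hat a')_+)$ (well defined on $T^*_{\vec a}\mathcal M$). $E$ is the Euler vector field, characterized by $\partial_E\vec a=(a-\frac z{n_0}a',\ \hat a-\frac z{n_0}\hat a')$. *)

theory Defs
  imports "HOL-Complex_Analysis.Complex_Analysis"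
begin

text \<open>Disk data: the disks are D_j = cball (c j) (r j), j = 1..m, with boundary
  circles gamma_j = circlepath (c j) (r j) (positively oriented).\<close>

definition cint :: "nat \<Rightarrow> (nat \<Rightarrow> complex) \<Rightarrow> (nat \<Rightarrow> real) \<Rightarrow> (complex \<Rightarrow> complex) \<Rightarrow> complex" where
  "cint m c r f = (1 / (2 * of_real pi * \<i>)) *
      (\<Sum>s = 1..m. contour_integral (circlepath (c s) (r s)) f)"

definition cauchy_int :: "nat \<Rightarrow> (nat \<Rightarrow> complex) \<Rightarrow> (nat \<Rightarrow> real) \<Rightarrow> (complex \<Rightarrow> complex) \<Rightarrow> complex \<Rightarrow> complex" where
  "cauchy_int m c r f z = cint m c r (\<lambda>p. f p / (p - z))"

definition int_disks :: "nat \<Rightarrow> (nat \<Rightarrow> complex) \<Rightarrow> (nat \<Rightarrow> real) \<Rightarrow> complex set" where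
  "int_disks m c r = (\<Union>j\<in>{1..m}. ball (c j) (r j))"

definition circles :: "nat \<Rightarrow> (nat \<Rightarrow> complex) \<Rightarrow> (nat \<Rightarrow> real) \<Rightarrow> complex set" where
  "circles m c r = (\<Union>j\<in>{1..m}. sphere (c j) (r j))"

text \<open>f_+ : the Cauchy integral inside the disks; on the circles its (continuous)
  boundary value from inside, i.e. the value of its holomorphic continuation;
  outside, the continuation f + Cauchy integral. f_- = f - f_+.\<close>
definition proj_plus :: "nat \<Rightarrow> (nat \<Rightarrow> complex) \<Rightarrow> (nat \<Rightarrow> real) \<Rightarrow> (complex \<Rightarrow> complex) \<Rightarrow> complex \<Rightarrow> complex" where
  "proj_plus m c r f z =
     (if z \<in> int_disks m c r then cauchy_int m c r f z
      else if z \<in> circles m c r then Lim (at z within int_disks m c r) (cauchy_int m c r f)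
      else f z + cauchy_int m c r f z)"

definition proj_minus :: "nat \<Rightarrow> (nat \<Rightarrow> complex) \<Rightarrow> (nat \<Rightarrow> real) \<Rightarrow> (complex \<Rightarrow> complex) \<Rightarrow> complex \<Rightarrow> complex" where
  "proj_minus m c r f z = f z - proj_plus m c r f z"

definition inH :: "nat \<Rightarrow> (nat \<Rightarrow> complex) \<Rightarrow> (nat \<Rightarrow> real) \<Rightarrow> (complex \<Rightarrow> complex) \<Rightarrow> bool" where
  "inH m c r f \<longleftrightarrow> (\<exists>U. open U \<and> circles m c r \<subseteq> U \<and> f holomorphic_on U)"

definition inM :: "nat \<Rightarrow> (nat \<Rightarrow> nat) \<Rightarrow> (nat \<Rightarrow> int) \<Rightarrow> (nat \<Rightarrow> complex) \<Rightarrow> (nat \<Rightarrow> real)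
     \<Rightarrow> (complex \<Rightarrow> complex) \<Rightarrow> (complex \<Rightarrow> complex) \<Rightarrow> bool" where
  "inM m n d c r a ah \<longleftrightarrow>
     \<comment> \<open>a holomorphic near the closure of D^ext in C, pole at infinity of the form z^n0 + a_{n0-2} z^{n0-2} + ...\<close>
     (\<exists>U. open U \<and> - int_disks m c r \<subseteq> U \<and> a holomorphic_on U) \<and>
     (\<exists>C R. \<forall>z. R \<le> norm z \<longrightarrow> norm (a z - z ^ n 0) \<le> C * norm z powr (real (n 0) - 2)) \<and>
     \<comment> \<open>ah meromorphic near the closed disks, with only poles phi_j of order exactly n_j\<close>
     (\<exists>\<phi> :: nat \<Rightarrow> complex.
        (\<forall>j\<in>{1..m}. \<phi> j \<in> ball (c j) (r j)) \<and>
        (\<exists>U. open U \<and> (\<Union>j\<in>{1..m}. cball (c j) (r j)) \<subseteq> U \<and> ah holomorphic_on (U - \<phi> ` {1..m})) \<and>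
        (\<forall>j\<in>{1..m}. is_pole ah (\<phi> j) \<and> zorder ah (\<phi> j) = - int (n j))) \<and>
     \<comment> \<open>zeta = a - ah = w_j^{d_j} on gamma_j\<close>
     (\<forall>j\<in>{1..m}. \<exists>V w. open V \<and> sphere (c j) (r j) \<subseteq> V \<and> w holomorphic_on V \<and>
        (\<forall>z\<in>V. deriv w z \<noteq> 0) \<and>
        (\<forall>z\<in>sphere (c j) (r j). w z \<noteq> 0 \<and> a z - ah z = w z powi d j) \<and>
        winding_number (w \<circ> circlepath (c j) (r j)) 0 = 1)"

definition Cop :: "nat \<Rightarrow> (nat \<Rightarrow> complex) \<Rightarrow> (nat \<Rightarrow> real) \<Rightarrow> (complex \<Rightarrow> complex) \<Rightarrow> (complex \<Rightarrow> complex)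
    \<Rightarrow> (complex \<Rightarrow> complex) \<times> (complex \<Rightarrow> complex) \<Rightarrow> (complex \<Rightarrow> complex) \<times> (complex \<Rightarrow> complex)
    \<Rightarrow> (complex \<Rightarrow> complex) \<times> (complex \<Rightarrow> complex)" where
  "Cop m c r a ah \<xi>v \<omega>v =
     (let \<xi> = fst \<xi>v; \<xi>h = snd \<xi>v; \<omega> = fst \<omega>v; \<omega>h = snd \<omega>v;
          P = (\<lambda>p. \<omega> p * \<xi> p + \<omega>h p * \<xi>h p);
          Q = (\<lambda>p. \<omega> p * deriv a p + \<omega>h p * deriv ah p)
      in (\<lambda>z. deriv a z * proj_minus m c r P z - \<xi> z * proj_minus m c r Q z,
          \<lambda>z. - deriv ah z * proj_plus m c r P z + \<xi>h z * proj_plus m c r Q z))"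

definition euler :: "nat \<Rightarrow> (complex \<Rightarrow> complex) \<Rightarrow> (complex \<Rightarrow> complex) \<Rightarrow> (complex \<Rightarrow> complex) \<times> (complex \<Rightarrow> complex)" where
  "euler n0 a ah = (\<lambda>z. a z - z / of_nat n0 * deriv a z, \<lambda>z. ah z - z / of_nat n0 * deriv ah z)"

definition pairing :: "nat \<Rightarrow> (nat \<Rightarrow> complex) \<Rightarrow> (nat \<Rightarrow> real)
    \<Rightarrow> (complex \<Rightarrow> complex) \<times> (complex \<Rightarrow> complex) \<Rightarrow> (complex \<Rightarrow> complex) \<times> (complex \<Rightarrow> complex) \<Rightarrow> complex" where
  "pairing m c r \<omega>v X = cint m c r (\<lambda>z. fst \<omega>v z * fst X z + snd \<omega>v z * snd X z)"

definition gform :: "nat \<Rightarrow> (nat \<Rightarrow> nat) \<Rightarrow> (nat \<Rightarrow> complex) \<Rightarrow> (nat \<Rightarrow> real) \<Rightarrow> (complex \<Rightarrow> complex) \<Rightarrow> (complex \<Rightarrow> complex)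
    \<Rightarrow> (complex \<Rightarrow> complex) \<times> (complex \<Rightarrow> complex) \<Rightarrow> (complex \<Rightarrow> complex) \<times> (complex \<Rightarrow> complex) \<Rightarrow> complex" where
  "gform m n c r a ah \<omega>1 \<omega>2 = pairing m c r \<omega>1 (Cop m c r a ah (euler (n 0) a ah) \<omega>2)"

end

theory Submission
  imports Defs
begin

definition ci :: "complex \<Rightarrow> real \<Rightarrow> (complex \<Rightarrow> complex) \<Rightarrow> complex \<Rightarrow> complex" where
  "ci c \<rho> f z = contour_integral (circlepath c \<rho>) (\<lambda>p. f p / (p - z))"

lemma ci_integrable:
  assumes "continuous_on (sphere c \<rho>) f" "0 < \<rho>" "z \<notin> sphere c \<rho>"
  shows "(\<lambda>p. f p / (p - z)) contour_integrable_on (circlepath c \<rho>)"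
proof -
  have "continuous_on (sphere c \<rho>) (\<lambda>p. f p / (p - z))"
    using assms by (intro continuous_intros) auto
  then show ?thesis using assms
    by (intro contour_integrable_continuous_circlepath) (simp add: path_image_circlepath_nonneg)
qed

lemma ci_holo:
  assumes "continuous_on (sphere c \<rho>) f" "0 < \<rho>"
  shows "ci c \<rho> f holomorphic_on (- sphere c \<rho>)"
proof -
  have pi: "path_image (circlepath c \<rho>) = sphere c \<rho>"
    using assms by (simp add: path_image_circlepath_nonneg)
  have "\<exists>f'. DERIV (ci c \<rho> f) w :> f'" if w: "w \<in> - sphere c \<rho>" for w
  proof -
    have "(ci c \<rho> f has_field_derivative
        (of_nat 1 * contour_integral (circlepath c \<rho>) ((\<lambda>k w u. f u / (u-w)^k) (Suc 1) w))) (at w)"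
    proof (rule Cauchy_next_derivative(2)[where S="- sphere c \<rho>" and B="2*pi*\<rho>"])
      show "continuous_on (path_image (circlepath c \<rho>)) f" using pi assms by simp
      show "norm (vector_derivative (circlepath c \<rho>) (at t)) \<le> 2*pi*\<rho>" for t
        using assms by (simp add: vector_derivative_circlepath norm_mult)
      show "((\<lambda>u. f u / (u - w') ^ 1) has_contour_integral ci c \<rho> f w') (circlepath c \<rho>)"
        if "w' \<in> - sphere c \<rho> - path_image (circlepath c \<rho>)" for w'
        using ci_integrable[OF assms, of w'] that pi unfolding ci_def
        by (simp add: has_contour_integral_integral)
      show "open (- sphere c \<rho>)" by auto
      show "w \<in> - sphere c \<rho> - path_image (circlepath c \<rho>)" using w pi by auto
    qed auto
    then show ?thesis by blast
  qed
  moreover have "open (- sphere c \<rho>)" by auto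
  ultimately show ?thesis unfolding holomorphic_on_open[OF \<open>open (- sphere c \<rho>)\<close>] by blast
qed

lemma circ_deform:
  assumes "open S" "g holomorphic_on S" "0 < \<rho>1" "0 < \<rho>2"
    and "\<And>\<rho>. min \<rho>1 \<rho>2 \<le> \<rho> \<Longrightarrow> \<rho> \<le> max \<rho>1 \<rho>2 \<Longrightarrow> sphere c \<rho> \<subseteq> S"
  shows "contour_integral (circlepath c \<rho>1) g = contour_integral (circlepath c \<rho>2) g"
proof (rule Cauchy_theorem_homotopic_loops[OF _ assms(1,2)])
  show "homotopic_loops S (circlepath c \<rho>1) (circlepath c \<rho>2)"
  proof (rule homotopic_loops_linear)
    fix t :: real assume t: "t \<in> {0..1}"
    show "closed_segment (circlepath c \<rho>1 t) (circlepath c \<rho>2 t) \<subseteq> S"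
    proof
      fix x assume "x \<in> closed_segment (circlepath c \<rho>1 t) (circlepath c \<rho>2 t)"
      then obtain u where u: "0 \<le> u" "u \<le> 1"
        and x: "x = (1 - u) *\<^sub>R circlepath c \<rho>1 t + u *\<^sub>R circlepath c \<rho>2 t"
        by (auto simp: closed_segment_def)
      define e where "e = exp (2 * of_real pi * \<i> * of_real t)"
      have ne: "norm e = 1" unfolding e_def by (simp add: norm_exp_eq_Re)
      define \<rho> where "\<rho> = (1 - u) * \<rho>1 + u * \<rho>2"
      have xe: "x = c + of_real \<rho> * e"
        unfolding x circlepath e_def \<rho>_def by (simp add: scaleR_conv_of_real algebra_simps)
      have a1: "(1-u) * min \<rho>1 \<rho>2 \<le> (1-u) * \<rho>1" "u * min \<rho>1 \<rho>2 \<le> u * \<rho>2"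
        "(1-u) * \<rho>1 \<le> (1-u) * max \<rho>1 \<rho>2" "u * \<rho>2 \<le> u * max \<rho>1 \<rho>2"
        using u by (intro mult_left_mono; simp)+
      have "min \<rho>1 \<rho>2 \<le> \<rho>" "\<rho> \<le> max \<rho>1 \<rho>2"
        unfolding \<rho>_def using a1 by (simp_all add: algebra_simps)
      moreover have "x \<in> sphere c \<rho>"
        using ne \<open>min \<rho>1 \<rho>2 \<le> \<rho>\<close> assms(3,4)
        by (simp add: xe dist_norm norm_mult)
      ultimately show "x \<in> S" using assms(5) by blast
    qed
  qed auto
qed auto



locale dsetup =
  fixes m :: nat and c :: "nat \<Rightarrow> complex" and r :: "nat \<Rightarrow> real" and U :: "complex set" and \<delta> :: real
  assumes rpos: "\<And>j. j \<in> {1..m} \<Longrightarrow> 0 < r j"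
    and dpos: "0 < \<delta>" and dlt: "\<And>j. j \<in> {1..m} \<Longrightarrow> \<delta> < r j"
    and Uopen: "open U"
    and annU: "\<And>j z. j \<in> {1..m} \<Longrightarrow> r j - \<delta> < dist (c j) z \<Longrightarrow> dist (c j) z < r j + \<delta> \<Longrightarrow> z \<in> U"
    and sep: "\<And>i j. i \<in> {1..m} \<Longrightarrow> j \<in> {1..m} \<Longrightarrow> i \<noteq> j \<Longrightarrow> r i + r j + 4*\<delta> < dist (c i) (c j)"
begin

definition kk :: complex where "kk = 1 / (2 * of_real pi * \<i>)"
definition Ej where "Ej f j z = (\<Sum>s\<in>{1..m}-{j}. ci (c s) (r s) f z)"
definition out where "out f j = ci (c j) (r j + \<delta>/2) f"
definition inn where "inn f j = ci (c j) (r j - \<delta>/2) f"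

lemma far:
  assumes "j \<in> {1..m}" "s \<in> {1..m}" "s \<noteq> j" "dist (c j) z < r j + \<delta>"
  shows "r s + 3*\<delta> < dist (c s) z"
proof -
  have "r s + r j + 4*\<delta> < dist (c s) (c j)" using sep assms by blast
  moreover have "dist (c s) (c j) \<le> dist (c s) z + dist (c j) z" by (metis dist_commute dist_triangle)
  ultimately show ?thesis using assms(4) by linarith
qed

lemma sphere_U:
  assumes "j \<in> {1..m}" "\<bar>\<rho> - r j\<bar> < \<delta>"
  shows "sphere (c j) \<rho> \<subseteq> U"
  using annU[OF assms(1)] assms(2) by auto

lemma cont_U:
  assumes "f holomorphic_on U" "j \<in> {1..m}" "\<bar>\<rho> - r j\<bar> < \<delta>"
  shows "continuous_on (sphere (c j) \<rho>) f"
  using assms sphere_U holomorphic_on_imp_continuous_on holomorphic_on_subset by metis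

lemma rho_pos: "j \<in> {1..m} \<Longrightarrow> \<bar>\<rho> - r j\<bar> < \<delta> \<Longrightarrow> 0 < \<rho>"
  using dlt[of j] by linarith

lemma Ej_holo:
  assumes "f holomorphic_on U" "j \<in> {1..m}"
  shows "Ej f j holomorphic_on ball (c j) (r j + \<delta>)"
  unfolding Ej_def[abs_def]
proof (intro holomorphic_on_sum)
  fix s assume s: "s \<in> {1..m} - {j}"
  have "ci (c s) (r s) f holomorphic_on (- sphere (c s) (r s))"
    using s by (intro ci_holo cont_U[OF assms(1)] rpos) (auto simp: dpos)
  moreover have "ball (c j) (r j + \<delta>) \<subseteq> - sphere (c s) (r s)"
  proof
    fix x assume "x \<in> ball (c j) (r j + \<delta>)"
    then have "r s + 3*\<delta> < dist (c s) x" using far[OF assms(2), of s x] s by auto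
    then show "x \<in> - sphere (c s) (r s)" using dpos by auto
  qed
  ultimately show "ci (c s) (r s) f holomorphic_on ball (c j) (r j + \<delta>)"
    by (rule holomorphic_on_subset)
qed

lemma out_holo:
  assumes "f holomorphic_on U" "j \<in> {1..m}"
  shows "out f j holomorphic_on ball (c j) (r j + \<delta>/2)"
proof -
  have "out f j holomorphic_on (- sphere (c j) (r j + \<delta>/2))"
    unfolding out_def using assms dpos
    by (intro ci_holo cont_U rho_pos[OF assms(2)]) auto
  then show ?thesis by (rule holomorphic_on_subset) auto
qed

lemma inn_holo:
  assumes "f holomorphic_on U" "j \<in> {1..m}"
  shows "inn f j holomorphic_on (- cball (c j) (r j - \<delta>/2))"
proof -
  have "inn f j holomorphic_on (- sphere (c j) (r j - \<delta>/2))"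
    unfolding inn_def using assms dpos
    by (intro ci_holo cont_U rho_pos[OF assms(2)]) auto
  then show ?thesis by (rule holomorphic_on_subset) auto
qed

lemma sphere_not_int:
  assumes "j \<in> {1..m}" "z \<in> sphere (c j) (r j)"
  shows "z \<notin> int_disks m c r" "z \<in> circles m c r"
proof -
  show "z \<in> circles m c r" using assms unfolding circles_def by auto
  show "z \<notin> int_disks m c r"
  proof
    assume "z \<in> int_disks m c r"
    then obtain s where s: "s \<in> {1..m}" "z \<in> ball (c s) (r s)" unfolding int_disks_def by auto
    show False
    proof (cases "s = j")
      case True then show ?thesis using s assms by auto
    next
      case False
      then have "r s + 3*\<delta> < dist (c s) z" using far[OF assms(1) s(1)] assms dpos by auto
      then show ?thesis using s dpos by auto
    qed
  qed
qed

lemma cauchy_int_split: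
  assumes "j \<in> {1..m}"
  shows "cauchy_int m c r f w = kk * (ci (c j) (r j) f w + Ej f j w)"
proof -
  have "(\<Sum>s = 1..m. ci (c s) (r s) f w) = ci (c j) (r j) f w + Ej f j w"
    unfolding Ej_def using assms by (simp add: sum.remove)
  then show ?thesis
    unfolding cauchy_int_def cint_def kk_def by (simp add: ci_def)
qed

end


context dsetup begin

lemma in_ball_near:
  assumes "j \<in> {1..m}" "z \<in> sphere (c j) (r j)" "w \<in> int_disks m c r" "dist w z < \<delta>"
  shows "w \<in> ball (c j) (r j)"
proof -
  obtain s where s: "s \<in> {1..m}" "w \<in> ball (c s) (r s)" using assms(3) unfolding int_disks_def by auto
  show ?thesis
  proof (cases "s = j")
    case True then show ?thesis using s by simp
  next
    case False
    then have "r s + 3*\<delta> < dist (c s) z" using far[OF assms(1) s(1)] assms dpos by auto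
    moreover have "dist (c s) z \<le> dist (c s) w + dist w z" by (rule dist_triangle)
    ultimately show ?thesis using s assms(4) dpos by auto
  qed
qed

lemma ci_deform_out:
  assumes "f holomorphic_on U" "j \<in> {1..m}" "w \<in> ball (c j) (r j)"
  shows "ci (c j) (r j) f w = out f j w"
proof -
  define S where "S = U \<inter> - cball (c j) (dist (c j) w)"
  have "contour_integral (circlepath (c j) (r j)) (\<lambda>p. f p / (p - w))
      = contour_integral (circlepath (c j) (r j + \<delta>/2)) (\<lambda>p. f p / (p - w))"
  proof (rule circ_deform)
    show "open S" unfolding S_def using Uopen by auto
    show "(\<lambda>p. f p / (p - w)) holomorphic_on S"
      unfolding S_def using assms(1)
      by (intro holomorphic_intros) (auto intro: holomorphic_on_subset)
    show "0 < r j" "0 < r j + \<delta>/2" using rpos[OF assms(2)] dpos by auto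
    fix \<rho> assume "min (r j) (r j + \<delta> / 2) \<le> \<rho>" "\<rho> \<le> max (r j) (r j + \<delta> / 2)"
    then have "r j \<le> \<rho>" "\<rho> \<le> r j + \<delta>/2" using dpos by auto
    then show "sphere (c j) \<rho> \<subseteq> S"
      unfolding S_def using sphere_U[OF assms(2), of \<rho>] assms(3) dpos by auto
  qed
  then show ?thesis unfolding ci_def out_def by simp
qed

lemma plus_val:
  assumes "f holomorphic_on U" "j \<in> {1..m}" "z \<in> sphere (c j) (r j)"
  shows "proj_plus m c r f z = kk * (Ej f j z + out f j z)"
proof -
  define K where "K = (\<lambda>w. kk * (Ej f j w + out f j w))"
  have "K holomorphic_on ball (c j) (r j + \<delta>/2)"
  proof -
    have "ball (c j) (r j + \<delta>/2) \<subseteq> ball (c j) (r j + \<delta>)" using dpos by auto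
    then have "Ej f j holomorphic_on ball (c j) (r j + \<delta>/2)"
      using Ej_holo[OF assms(1,2)] holomorphic_on_subset by blast
    then show ?thesis unfolding K_def using out_holo[OF assms(1,2)]
      by (intro holomorphic_intros)
  qed
  moreover have "z \<in> ball (c j) (r j + \<delta>/2)" using assms dpos by auto
  ultimately have "isCont K z"
    using continuous_on_eq_continuous_at[OF open_ball] holomorphic_on_imp_continuous_on by blast
  then have "(K \<longlongrightarrow> K z) (at z within int_disks m c r)"
    unfolding isCont_def by (rule tendsto_within_subset) auto
  moreover have "eventually (\<lambda>w. K w = cauchy_int m c r f w) (at z within int_disks m c r)"
    unfolding eventually_at
  proof (intro exI[of _ \<delta>] conjI ballI impI)
    fix w assume "w \<in> int_disks m c r" "w \<noteq> z \<and> dist w z < \<delta>"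
    then have "w \<in> ball (c j) (r j)" using in_ball_near assms by blast
    then show "K w = cauchy_int m c r f w"
      unfolding K_def cauchy_int_split[OF assms(2)] ci_deform_out[OF assms(1,2) \<open>w \<in> ball (c j) (r j)\<close>]
      by (simp add: algebra_simps)
  qed (rule dpos)
  ultimately have lim: "(cauchy_int m c r f \<longlongrightarrow> K z) (at z within int_disks m c r)"
    by (rule Lim_transform_eventually)
  have "z islimpt ball (c j) (r j)" using assms rpos by (simp add: islimpt_ball)
  moreover have "ball (c j) (r j) \<subseteq> int_disks m c r" using assms(2) unfolding int_disks_def by auto
  ultimately have "\<not> trivial_limit (at z within int_disks m c r)"
    using islimpt_subset trivial_limit_within by blast
  then have "Lim (at z within int_disks m c r) (cauchy_int m c r f) = K z"
    using lim by (rule tendsto_Lim)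
  then show ?thesis
    unfolding proj_plus_def using sphere_not_int[OF assms(2,3)] by (simp add: K_def)
qed

lemma annulus_formula:
  assumes "f holomorphic_on U" "j \<in> {1..m}" "z \<in> sphere (c j) (r j)"
  shows "f z = kk * (out f j z - inn f j z)"
proof -
  define g where "g = (\<lambda>p. if p = z then deriv f z else (f p - f z) / (p - z))"
  have gh: "g holomorphic_on U" unfolding g_def by (rule pole_lemma_open[OF assms(1) Uopen])
  have rj: "0 < r j" "\<delta> < r j" using rpos dlt assms(2) by auto
  have eq: "contour_integral (circlepath (c j) (r j + \<delta>/2)) g
      = contour_integral (circlepath (c j) (r j - \<delta>/2)) g"
  proof (rule circ_deform[OF Uopen gh])
    show "0 < r j + \<delta>/2" "0 < r j - \<delta>/2" using rj dpos by auto
    fix \<rho> assume "min (r j + \<delta> / 2) (r j - \<delta> / 2) \<le> \<rho>" "\<rho> \<le> max (r j + \<delta> / 2) (r j - \<delta> / 2)"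
    then show "sphere (c j) \<rho> \<subseteq> U" using sphere_U[OF assms(2), of \<rho>] dpos by auto
  qed
  have zn: "z \<notin> sphere (c j) (r j + \<delta>/2)" "z \<notin> sphere (c j) (r j - \<delta>/2)" using assms dpos by auto
  have pi1: "path_image (circlepath (c j) (r j + \<delta>/2)) = sphere (c j) (r j + \<delta>/2)"
    using rj dpos by (simp add: path_image_circlepath_nonneg)
  have pi2: "path_image (circlepath (c j) (r j - \<delta>/2)) = sphere (c j) (r j - \<delta>/2)"
    using rj dpos by (simp add: path_image_circlepath_nonneg)
  have i1: "((\<lambda>p. f p / (p - z)) has_contour_integral out f j z) (circlepath (c j) (r j + \<delta>/2))"
    unfolding out_def ci_def using ci_integrable[OF cont_U[OF assms(1,2)], of "r j + \<delta>/2" z] zn rj dpos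
    by (auto intro: has_contour_integral_integral)
  have i2: "((\<lambda>p. f p / (p - z)) has_contour_integral inn f j z) (circlepath (c j) (r j - \<delta>/2))"
    unfolding inn_def ci_def using ci_integrable[OF cont_U[OF assms(1,2)], of "r j - \<delta>/2" z] zn rj dpos
    by (auto intro: has_contour_integral_integral)
  have w1: "((\<lambda>p. 1 / (p - z)) has_contour_integral (2 * of_real pi * \<i>)) (circlepath (c j) (r j + \<delta>/2))"
    using Cauchy_integral_circlepath_simple[of "\<lambda>_. 1" "c j" "r j + \<delta>/2" z] assms dpos
    by (simp add: dist_norm norm_minus_commute)
  have w2: "((\<lambda>p. 1 / (p - z)) has_contour_integral 0) (circlepath (c j) (r j - \<delta>/2))"
  proof (rule Cauchy_theorem_convex_simple[of _ "ball (c j) (r j - \<delta>/4)"])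
    show "(\<lambda>p. 1 / (p - z)) holomorphic_on ball (c j) (r j - \<delta>/4)"
      using assms dpos by (intro holomorphic_intros) auto
    show "path_image (circlepath (c j) (r j - \<delta> / 2)) \<subseteq> ball (c j) (r j - \<delta> / 4)"
      using pi2 dpos by auto
  qed auto
  have "((\<lambda>p. f p / (p - z) - f z * (1 / (p - z))) has_contour_integral
        (out f j z - f z * (2 * of_real pi * \<i>))) (circlepath (c j) (r j + \<delta>/2))"
    by (intro has_contour_integral_diff i1 has_contour_integral_lmul w1)
  then have h1: "(g has_contour_integral (out f j z - f z * (2 * of_real pi * \<i>))) (circlepath (c j) (r j + \<delta>/2))"
    by (rule has_contour_integral_eq) (use zn pi1 in \<open>auto simp: g_def diff_divide_distrib\<close>)
  have "((\<lambda>p. f p / (p - z) - f z * (1 / (p - z))) has_contour_integral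
        (inn f j z - f z * 0)) (circlepath (c j) (r j - \<delta>/2))"
    by (intro has_contour_integral_diff i2 has_contour_integral_lmul w2)
  then have "((\<lambda>p. f p / (p - z) - f z * (1 / (p - z))) has_contour_integral
        (inn f j z)) (circlepath (c j) (r j - \<delta>/2))" by simp
  then have h2: "(g has_contour_integral inn f j z) (circlepath (c j) (r j - \<delta>/2))"
    by (rule has_contour_integral_eq) (use zn pi2 in \<open>auto simp: g_def diff_divide_distrib\<close>)
  have "out f j z - f z * (2 * of_real pi * \<i>) = inn f j z"
    using eq contour_integral_unique[OF h1] contour_integral_unique[OF h2] by simp
  then show ?thesis unfolding kk_def by (simp add: field_simps)
qed

lemma minus_val:
  assumes "f holomorphic_on U" "j \<in> {1..m}" "z \<in> sphere (c j) (r j)"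
  shows "proj_minus m c r f z = - kk * (Ej f j z + inn f j z)"
  unfolding proj_minus_def plus_val[OF assms] annulus_formula[OF assms] by (simp add: algebra_simps)

end


lemma ci_lin:
  assumes "continuous_on (sphere c \<rho>) F" "continuous_on (sphere c \<rho>) G" "0 < \<rho>" "z \<notin> sphere c \<rho>"
  shows "ci c \<rho> (\<lambda>p. F p - k * G p) z = ci c \<rho> F z - k * ci c \<rho> G z"
proof -
  have "(\<lambda>p. (F p - k * G p) / (p - z)) = (\<lambda>p. F p / (p - z) - k * (G p / (p - z)))"
    by (simp add: diff_divide_distrib)
  moreover have i1: "(\<lambda>p. F p / (p - z)) contour_integrable_on circlepath c \<rho>"
    and i2: "(\<lambda>p. G p / (p - z)) contour_integrable_on circlepath c \<rho>"
    using ci_integrable[OF assms(1,3,4)] ci_integrable[OF assms(2,3,4)] by auto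
  ultimately show ?thesis unfolding ci_def
    using contour_integral_diff[OF i1 contour_integrable_lmul[OF i2, of k]] contour_integral_lmul[OF i2, of k]
    by simp
qed

lemma ci_mulz:
  assumes "continuous_on (sphere c \<rho>) Q" "0 < \<rho>" "z \<notin> sphere c \<rho>"
  shows "ci c \<rho> (\<lambda>p. p * Q p) z = contour_integral (circlepath c \<rho>) Q + z * ci c \<rho> Q z"
proof -
  have pim: "path_image (circlepath c \<rho>) = sphere c \<rho>" using assms by (simp add: path_image_circlepath_nonneg)
  have "ci c \<rho> (\<lambda>p. p * Q p) z = contour_integral (circlepath c \<rho>) (\<lambda>p. Q p + z * (Q p / (p - z)))"
    unfolding ci_def
  proof (rule contour_integral_eq)
    fix p assume "p \<in> path_image (circlepath c \<rho>)"
    then have "p \<noteq> z" using pim assms by auto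
    then show "p * Q p / (p - z) = Q p + z * (Q p / (p - z))" by (simp add: field_simps)
  qed
  also have "\<dots> = contour_integral (circlepath c \<rho>) Q + z * ci c \<rho> Q z"
  proof -
    have i1: "(\<lambda>p. Q p / (p - z)) contour_integrable_on circlepath c \<rho>" using ci_integrable[OF assms] .
    have i2: "Q contour_integrable_on circlepath c \<rho>"
      using assms pim by (simp add: contour_integrable_continuous_circlepath)
    show ?thesis unfolding ci_def
      using contour_integral_add[OF i2 contour_integrable_lmul[OF i1, of z]] contour_integral_lmul[OF i1, of z]
      by simp
  qed
  finally show ?thesis .
qed

context dsetup begin

definition cs :: "(complex \<Rightarrow> complex) \<Rightarrow> bool" where "cs F \<longleftrightarrow> (\<forall>j\<in>{1..m}. continuous_on (sphere (c j) (r j)) F)"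

lemma cs_U: "f holomorphic_on U \<Longrightarrow> cs f"
  unfolding cs_def using cont_U dpos by auto

lemma pim: "j \<in> {1..m} \<Longrightarrow> path_image (circlepath (c j) (r j)) = sphere (c j) (r j)"
  using rpos by (simp add: path_image_circlepath_nonneg less_imp_le)

lemma K_holo:
  assumes "f holomorphic_on U" "j \<in> {1..m}"
  shows "(\<lambda>w. Ej f j w + out f j w) holomorphic_on ball (c j) (r j + \<delta>/2)"
proof -
  have "ball (c j) (r j + \<delta>/2) \<subseteq> ball (c j) (r j + \<delta>)" using dpos by auto
  then have "Ej f j holomorphic_on ball (c j) (r j + \<delta>/2)"
    using Ej_holo[OF assms(1,2)] holomorphic_on_subset by blast
  then show ?thesis using out_holo[OF assms(1,2)] by (intro holomorphic_intros)
qed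

lemma sphere_in_ball: "j \<in> {1..m} \<Longrightarrow> sphere (c j) (r j) \<subseteq> ball (c j) (r j + \<delta>/2)"
  using dpos by auto

lemma cs_plus:
  assumes "f holomorphic_on U"
  shows "cs (proj_plus m c r f)"
  unfolding cs_def
proof
  fix j assume j: "j \<in> {1..m}"
  have "continuous_on (sphere (c j) (r j)) (\<lambda>w. kk * (Ej f j w + out f j w))"
    using K_holo[OF assms j] sphere_in_ball[OF j]
    by (intro continuous_intros holomorphic_on_imp_continuous_on) (auto intro: holomorphic_on_subset)
  then show "continuous_on (sphere (c j) (r j)) (proj_plus m c r f)"
    by (rule continuous_on_eq) (use plus_val[OF assms j] in auto)
qed

lemma cs_minus:
  assumes "f holomorphic_on U"
  shows "cs (proj_minus m c r f)"
proof -
  have "cs (\<lambda>z. f z - proj_plus m c r f z)"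
    using cs_plus[OF assms] cs_U[OF assms] unfolding cs_def by (auto intro: continuous_intros)
  then show ?thesis unfolding proj_minus_def[abs_def] by simp
qed

lemma cs_add: "cs F \<Longrightarrow> cs G \<Longrightarrow> cs (\<lambda>z. F z + G z)"
  unfolding cs_def by (simp add: continuous_on_add)
lemma cs_diff: "cs F \<Longrightarrow> cs G \<Longrightarrow> cs (\<lambda>z. F z - G z)"
  unfolding cs_def by (simp add: continuous_on_diff)
lemma cs_mult: "cs F \<Longrightarrow> cs G \<Longrightarrow> cs (\<lambda>z. F z * G z)"
  unfolding cs_def by (simp add: continuous_on_mult)
lemma cs_const: "cs (\<lambda>z. k)"
  unfolding cs_def by simp

lemma cint_integrable: "cs F \<Longrightarrow> j \<in> {1..m} \<Longrightarrow> F contour_integrable_on (circlepath (c j) (r j))"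
  unfolding cs_def using pim by (simp add: contour_integrable_continuous_circlepath)

lemma cint_add: "cs F \<Longrightarrow> cs G \<Longrightarrow> cint m c r (\<lambda>z. F z + G z) = cint m c r F + cint m c r G"
  unfolding cint_def
  by (simp add: contour_integral_add cint_integrable sum.distrib distrib_left)

lemma cint_diff: "cs F \<Longrightarrow> cs G \<Longrightarrow> cint m c r (\<lambda>z. F z - G z) = cint m c r F - cint m c r G"
  unfolding cint_def
  by (simp add: contour_integral_diff cint_integrable sum_subtractf right_diff_distrib)

lemma cint_lmul: "cs F \<Longrightarrow> cint m c r (\<lambda>z. k * F z) = k * cint m c r F"
  unfolding cint_def
  by (simp add: contour_integral_lmul cint_integrable sum_distrib_left)

lemma cint_cong:
  assumes "\<And>j z. j \<in> {1..m} \<Longrightarrow> z \<in> sphere (c j) (r j) \<Longrightarrow> F z = G z"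
  shows "cint m c r F = cint m c r G"
proof -
  have "contour_integral (circlepath (c j) (r j)) F = contour_integral (circlepath (c j) (r j)) G"
    if j: "j \<in> {1..m}" for j
  proof (rule contour_integral_eq)
    fix x assume "x \<in> path_image (circlepath (c j) (r j))"
    then have "x \<in> sphere (c j) (r j)" by (simp only: pim[OF j])
    then show "F x = G x" using assms j by blast
  qed
  then show ?thesis unfolding cint_def by simp
qed

lemma cintA:
  assumes "f holomorphic_on U" "g holomorphic_on U"
  shows "cint m c r (\<lambda>z. proj_plus m c r f z * proj_plus m c r g z) = 0"
proof -
  have "contour_integral (circlepath (c j) (r j)) (\<lambda>z. proj_plus m c r f z * proj_plus m c r g z) = 0"
    if j: "j \<in> {1..m}" for j
  proof (rule contour_integral_unique)
    have "((\<lambda>z. kk * (Ej f j z + out f j z) * (kk * (Ej g j z + out g j z))) has_contour_integral 0)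
        (circlepath (c j) (r j))"
    proof (rule Cauchy_theorem_convex_simple[of _ "ball (c j) (r j + \<delta>/2)"])
      show "(\<lambda>z. kk * (Ej f j z + out f j z) * (kk * (Ej g j z + out g j z))) holomorphic_on ball (c j) (r j + \<delta> / 2)"
        using holomorphic_on_mult[OF holomorphic_on_mult[OF holomorphic_on_const K_holo[OF assms(1) j]]
           holomorphic_on_mult[OF holomorphic_on_const K_holo[OF assms(2) j]]] by simp
      show "path_image (circlepath (c j) (r j)) \<subseteq> ball (c j) (r j + \<delta> / 2)"
        using pim[OF j] sphere_in_ball[OF j] by simp
    qed auto
    then show "((\<lambda>z. proj_plus m c r f z * proj_plus m c r g z) has_contour_integral 0) (circlepath (c j) (r j))"
    proof (rule has_contour_integral_eq)
      fix x assume "x \<in> path_image (circlepath (c j) (r j))"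
      then have "x \<in> sphere (c j) (r j)" by (simp only: pim[OF j])
      then show "kk * (Ej f j x + out f j x) * (kk * (Ej g j x + out g j x)) = proj_plus m c r f x * proj_plus m c r g x"
        using plus_val[OF assms(1) j] plus_val[OF assms(2) j] by simp
    qed
  qed
  then show ?thesis unfolding cint_def by simp
qed

lemma minus_lin:
  assumes "F holomorphic_on U" "G holomorphic_on U" "j \<in> {1..m}" "z \<in> sphere (c j) (r j)"
  shows "proj_minus m c r (\<lambda>p. F p - k * G p) z = proj_minus m c r F z - k * proj_minus m c r G z"
proof -
  have h: "(\<lambda>p. F p - k * G p) holomorphic_on U" using assms by (intro holomorphic_intros)
  have e1: "Ej (\<lambda>p. F p - k * G p) j z = Ej F j z - k * Ej G j z"
    unfolding Ej_def sum_distrib_left sum_subtractf[symmetric]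
  proof (rule sum.cong[OF refl])
    fix s assume s: "s \<in> {1..m} - {j}"
    have "r s + 3*\<delta> < dist (c s) z" using far[OF assms(3), of s z] s assms(4) dpos by auto
    then have "z \<notin> sphere (c s) (r s)" using dpos by auto
    then show "ci (c s) (r s) (\<lambda>p. F p - k * G p) z = ci (c s) (r s) F z - k * ci (c s) (r s) G z"
      using s by (intro ci_lin cont_U assms rpos) (auto simp: dpos)
  qed
  have e2: "inn (\<lambda>p. F p - k * G p) j z = inn F j z - k * inn G j z"
    unfolding inn_def using assms dpos by (intro ci_lin cont_U rho_pos[OF assms(3)]) auto
  show ?thesis unfolding minus_val[OF h assms(3,4)] minus_val[OF assms(1) assms(3,4)]
      minus_val[OF assms(2) assms(3,4)] e1 e2 by (simp add: algebra_simps)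
qed

lemma minus_mulz:
  assumes "Q holomorphic_on U" "j \<in> {1..m}" "z \<in> sphere (c j) (r j)"
  shows "proj_minus m c r (\<lambda>p. p * Q p) z = z * proj_minus m c r Q z - cint m c r Q"
proof -
  have h: "(\<lambda>p. p * Q p) holomorphic_on U" using assms by (intro holomorphic_intros)
  have e1: "Ej (\<lambda>p. p * Q p) j z = (\<Sum>s\<in>{1..m}-{j}. contour_integral (circlepath (c s) (r s)) Q) + z * Ej Q j z"
    unfolding Ej_def sum_distrib_left sum.distrib[symmetric]
  proof (rule sum.cong[OF refl])
    fix s assume s: "s \<in> {1..m} - {j}"
    have "r s + 3*\<delta> < dist (c s) z" using far[OF assms(2), of s z] s assms(3) dpos by auto
    then have "z \<notin> sphere (c s) (r s)" using dpos by auto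
    then show "ci (c s) (r s) (\<lambda>p. p * Q p) z = contour_integral (circlepath (c s) (r s)) Q + z * ci (c s) (r s) Q z"
      using s by (intro ci_mulz cont_U assms rpos) (auto simp: dpos)
  qed
  have e2: "inn (\<lambda>p. p * Q p) j z = contour_integral (circlepath (c j) (r j - \<delta>/2)) Q + z * inn Q j z"
    unfolding inn_def using assms dpos by (intro ci_mulz cont_U rho_pos[OF assms(2)]) auto
  have e3: "contour_integral (circlepath (c j) (r j)) Q = contour_integral (circlepath (c j) (r j - \<delta>/2)) Q"
  proof (rule circ_deform[OF Uopen assms(1)])
    show "0 < r j" "0 < r j - \<delta>/2" using rpos[OF assms(2)] dlt[OF assms(2)] dpos by auto
    fix \<rho> assume "min (r j) (r j - \<delta> / 2) \<le> \<rho>" "\<rho> \<le> max (r j) (r j - \<delta> / 2)"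
    then show "sphere (c j) \<rho> \<subseteq> U" using sphere_U[OF assms(2), of \<rho>] dpos by auto
  qed
  have e4: "cint m c r Q = kk * (contour_integral (circlepath (c j) (r j)) Q
      + (\<Sum>s\<in>{1..m}-{j}. contour_integral (circlepath (c s) (r s)) Q))"
    unfolding cint_def kk_def using assms(2) by (simp add: sum.remove)
  show ?thesis unfolding minus_val[OF h assms(2,3)] minus_val[OF assms(1) assms(2,3)] e1 e2 e3 e4
    by (simp add: algebra_simps)
qed

end


lemma decay0:
  assumes h: "h holomorphic_on (- cball c \<rho>a)" and rho: "0 < \<rho>" "\<rho>a < \<rho>" and C: "0 \<le> C"
    and bd: "\<And>z. Ra \<le> norm (z - c) \<Longrightarrow> norm (h z) \<le> C / norm (z - c)^2"
  shows "contour_integral (circlepath c \<rho>) h = 0"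
proof -
  define I where "I = contour_integral (circlepath c \<rho>) h"
  have key: "norm I * R \<le> 2*pi*C" if R: "max \<rho> Ra \<le> R" for R
  proof -
    have Rp: "0 < R" using R rho by linarith
    have eq: "I = contour_integral (circlepath c R) h"
      unfolding I_def
    proof (rule circ_deform[where S="- cball c \<rho>a"])
      show "open (- cball c \<rho>a)" by auto
      show "h holomorphic_on - cball c \<rho>a" by (rule h)
      show "0 < \<rho>" "0 < R" using rho Rp by auto
      fix \<rho>' assume "min \<rho> R \<le> \<rho>'" "\<rho>' \<le> max \<rho> R"
      then have "\<rho>a < \<rho>'" using rho R by auto
      then show "sphere c \<rho>' \<subseteq> - cball c \<rho>a" by auto
    qed
    have "continuous_on (sphere c R) h"
      using holomorphic_on_imp_continuous_on[OF h] by (rule continuous_on_subset) (use R rho in auto)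
    then have "h contour_integrable_on circlepath c R"
      using Rp by (simp add: contour_integrable_continuous_circlepath path_image_circlepath_nonneg)
    then have hi: "(h has_contour_integral I) (circlepath c R)"
      using eq by (simp add: has_contour_integral_integral)
    have "norm I \<le> C / R^2 * (2*pi*R)"
    proof (rule has_contour_integral_bound_circlepath[OF hi])
      show "0 \<le> C / R^2" using C by simp
      show "0 < R" by (rule Rp)
      fix x assume "norm (x - c) = R"
      then show "norm (h x) \<le> C / R^2" using bd[of x] R by auto
    qed
    also have "\<dots> = 2*pi*C / R" using Rp by (simp add: power2_eq_square field_simps)
    finally show ?thesis using Rp by (simp add: field_simps)
  qed
  show ?thesis
  proof (rule ccontr)
    assume "contour_integral (circlepath c \<rho>) h \<noteq> 0"
    then have n: "0 < norm I" unfolding I_def by simp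
    define R where "R = max (max \<rho> Ra) (2*pi*C / norm I + 1)"
    have "norm I * R \<le> 2*pi*C" using key[of R] unfolding R_def by simp
    moreover have "norm I * (2*pi*C / norm I + 1) \<le> norm I * R"
      unfolding R_def using n by (intro mult_left_mono) auto
    moreover have "norm I * (2*pi*C / norm I + 1) = 2*pi*C + norm I" using n by (simp add: field_simps)
    ultimately show False using n by linarith
  qed
qed

lemma ci_bound:
  assumes f: "continuous_on (sphere c \<rho>) f" and rho: "0 < \<rho>"
  obtains C where "0 \<le> C" "\<And>z. 2*\<rho> \<le> norm (z - c) \<Longrightarrow> norm (ci c \<rho> f z) \<le> C / norm (z - c)"
proof -
  have "compact (f ` sphere c \<rho>)" by (intro compact_continuous_image f compact_sphere)
  then have "bounded (f ` sphere c \<rho>)" by (rule compact_imp_bounded)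
  then obtain B where B0: "B > 0" "\<forall>y\<in>f ` sphere c \<rho>. norm y \<le> B"
    unfolding bounded_pos by blast
  then have B: "B > 0" "\<And>x. x \<in> sphere c \<rho> \<Longrightarrow> norm (f x) \<le> B" by auto
  show ?thesis
  proof (rule that[of "4*pi*B*\<rho>"])
    show "0 \<le> 4*pi*B*\<rho>" using B rho by simp
    fix z assume z: "2*\<rho> \<le> norm (z - c)"
    have zn: "z \<notin> sphere c \<rho>" using z rho by (auto simp: dist_norm norm_minus_commute)
    have hi: "((\<lambda>p. f p / (p - z)) has_contour_integral ci c \<rho> f z) (circlepath c \<rho>)"
      unfolding ci_def using ci_integrable[OF f rho zn] by (rule has_contour_integral_integral)
    have "norm (ci c \<rho> f z) \<le> (2*B / norm (z - c)) * (2*pi*\<rho>)"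
    proof (rule has_contour_integral_bound_circlepath[OF hi])
      show "0 \<le> 2*B / norm (z - c)" using B by simp
      show "0 < \<rho>" by (rule rho)
      fix x assume x: "norm (x - c) = \<rho>"
      have "norm (z - c) \<le> norm (x - z) + norm (x - c)"
      proof -
        have "z - c = (x - c) - (x - z)" by simp
        then show ?thesis using norm_triangle_ineq4[of "x - c" "x - z"] by simp
      qed
      then have xz: "norm (z - c) / 2 \<le> norm (x - z)" using x z by linarith
      have "norm (f p / (p - z)) = norm (f p) / norm (p - z)" for p by (simp add: norm_divide)
      moreover have "norm (f x) / norm (x - z) \<le> B / (norm (z - c) / 2)"
        using B(2)[of x] x xz z rho B(1)
        by (intro frac_le) (auto simp: dist_norm norm_minus_commute)
      ultimately show "norm (f x / (x - z)) \<le> 2*B / norm (z - c)" by (simp add: mult.commute)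
    qed
    also have "\<dots> = 4*pi*B*\<rho> / norm (z - c)" by simp
    finally show "norm (ci c \<rho> f z) \<le> 4*pi*B*\<rho> / norm (z - c)" .
  qed
qed



lemma vd_circ: "continuous_on {0..1} (\<lambda>t. vector_derivative (circlepath c \<rho>) (at t))"
  by (simp add: vector_derivative_circlepath continuous_intros)

lemma fubini_pair:
  assumes f: "continuous_on (sphere c2 \<rho>2) f" and g: "continuous_on (sphere c1 \<rho>1) g"
    and rho: "0 < \<rho>1" "0 < \<rho>2" and disj: "sphere c1 \<rho>1 \<inter> sphere c2 \<rho>2 = {}"
  shows "contour_integral (circlepath c1 \<rho>1) (\<lambda>w. ci c2 \<rho>2 f w * g w)
       = - contour_integral (circlepath c2 \<rho>2) (\<lambda>z. f z * ci c1 \<rho>1 g z)"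
proof -
  have p1: "path_image (circlepath c1 \<rho>1) = sphere c1 \<rho>1" using rho by (simp add: path_image_circlepath_nonneg)
  have p2: "path_image (circlepath c2 \<rho>2) = sphere c2 \<rho>2" using rho by (simp add: path_image_circlepath_nonneg)
  define F where "F = (\<lambda>w z. f z * g w / (z - w))"
  have cont: "continuous_on (path_image (circlepath c1 \<rho>1) \<times> path_image (circlepath c2 \<rho>2)) (\<lambda>(y1, y2). F y1 y2)"
  proof -
    have "continuous_on (sphere c1 \<rho>1 \<times> sphere c2 \<rho>2) (\<lambda>x. f (snd x) * g (fst x) / (snd x - fst x))"
    proof (intro continuous_on_mult continuous_on_divide continuous_on_diff continuous_on_snd continuous_on_fst
        continuous_on_id ballI)
      show "continuous_on (sphere c1 \<rho>1 \<times> sphere c2 \<rho>2) (\<lambda>x. f (snd x))"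
        by (rule continuous_on_compose2[OF f continuous_on_snd[OF continuous_on_id]]) auto
      show "continuous_on (sphere c1 \<rho>1 \<times> sphere c2 \<rho>2) (\<lambda>x. g (fst x))"
        by (rule continuous_on_compose2[OF g continuous_on_fst[OF continuous_on_id]]) auto
      fix x assume "x \<in> sphere c1 \<rho>1 \<times> sphere c2 \<rho>2"
      then show "snd x - fst x \<noteq> 0" using disj by auto
    qed
    then show ?thesis unfolding p1 p2 F_def by (simp add: case_prod_beta)
  qed
  have sw: "contour_integral (circlepath c1 \<rho>1) (\<lambda>w. contour_integral (circlepath c2 \<rho>2) (F w))
      = contour_integral (circlepath c2 \<rho>2) (\<lambda>z. contour_integral (circlepath c1 \<rho>1) (\<lambda>w. F w z))"
    by (rule contour_integral_swap[OF cont valid_path_circlepath valid_path_circlepath vd_circ vd_circ])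
  have l: "contour_integral (circlepath c1 \<rho>1) (\<lambda>w. contour_integral (circlepath c2 \<rho>2) (F w))
      = contour_integral (circlepath c1 \<rho>1) (\<lambda>w. ci c2 \<rho>2 f w * g w)"
  proof (rule contour_integral_eq)
    fix w assume "w \<in> path_image (circlepath c1 \<rho>1)"
    then have "w \<in> sphere c1 \<rho>1" by (simp only: p1)
    then have w: "w \<notin> sphere c2 \<rho>2" using disj by auto
    have "contour_integral (circlepath c2 \<rho>2) (F w) = contour_integral (circlepath c2 \<rho>2) (\<lambda>z. g w * (f z / (z - w)))"
      unfolding F_def by (simp add: field_simps)
    also have "\<dots> = g w * ci c2 \<rho>2 f w"
      unfolding ci_def by (rule contour_integral_lmul[OF ci_integrable[OF f rho(2) w]])
    finally show "contour_integral (circlepath c2 \<rho>2) (F w) = ci c2 \<rho>2 f w * g w" by simp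
  qed
  have r: "contour_integral (circlepath c2 \<rho>2) (\<lambda>z. contour_integral (circlepath c1 \<rho>1) (\<lambda>w. F w z))
      = contour_integral (circlepath c2 \<rho>2) (\<lambda>z. - (f z * ci c1 \<rho>1 g z))"
  proof (rule contour_integral_eq)
    fix z assume "z \<in> path_image (circlepath c2 \<rho>2)"
    then have "z \<in> sphere c2 \<rho>2" by (simp only: p2)
    then have z: "z \<notin> sphere c1 \<rho>1" using disj by auto
    have "contour_integral (circlepath c1 \<rho>1) (\<lambda>w. F w z) = contour_integral (circlepath c1 \<rho>1) (\<lambda>w. (- f z) * (g w / (w - z)))"
    proof (rule contour_integral_eq)
      fix w assume "w \<in> path_image (circlepath c1 \<rho>1)"
      then have "w \<in> sphere c1 \<rho>1" by (simp only: p1)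
      then have "w \<noteq> z" using z by auto
      then show "F w z = - f z * (g w / (w - z))" unfolding F_def by (simp add: field_simps)
    qed
    also have "\<dots> = (- f z) * ci c1 \<rho>1 g z"
      unfolding ci_def by (rule contour_integral_lmul[OF ci_integrable[OF g rho(1) z]])
    finally show "contour_integral (circlepath c1 \<rho>1) (\<lambda>w. F w z) = - (f z * ci c1 \<rho>1 g z)" by simp
  qed
  show ?thesis using sw l r by (simp add: contour_integral_neg)
qed

lemma offdiag:
  fixes A B :: "nat \<Rightarrow> nat \<Rightarrow> complex"
  assumes "finite I" "\<And>j s. j \<in> I \<Longrightarrow> s \<in> I \<Longrightarrow> j \<noteq> s \<Longrightarrow> B s j = - A j s"
  shows "(\<Sum>j\<in>I. \<Sum>s\<in>I-{j}. A j s + B j s) = 0"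
proof -
  have e: "(\<Sum>s\<in>I-{j}. X s) = (\<Sum>s\<in>I. if s = j then 0 else X s)" if "j \<in> I" for j and X :: "nat \<Rightarrow> complex"
    using assms(1) that by (simp add: sum.If_cases Diff_eq Int_commute)
  have "(\<Sum>j\<in>I. \<Sum>s\<in>I-{j}. A j s + B j s) = (\<Sum>j\<in>I. \<Sum>s\<in>I. (if s = j then 0 else A j s) + (if s = j then 0 else B j s))"
  proof (rule sum.cong[OF refl])
    fix j assume j: "j \<in> I"
    show "(\<Sum>s\<in>I-{j}. A j s + B j s) = (\<Sum>s\<in>I. (if s = j then 0 else A j s) + (if s = j then 0 else B j s))"
      unfolding e[OF j] by (intro sum.cong refl) auto
  qed
  also have "\<dots> = (\<Sum>j\<in>I. \<Sum>s\<in>I. if s = j then 0 else A j s) + (\<Sum>j\<in>I. \<Sum>s\<in>I. if s = j then 0 else B j s)"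
    by (simp add: sum.distrib)
  also have "(\<Sum>j\<in>I. \<Sum>s\<in>I. if s = j then 0 else B j s) = (\<Sum>s\<in>I. \<Sum>j\<in>I. if s = j then 0 else B j s)"
    by (rule sum.swap)
  also have "\<dots> = (\<Sum>s\<in>I. \<Sum>j\<in>I. - (if j = s then 0 else A s j))"
    using assms(2) by (intro sum.cong refl) auto
  finally show ?thesis by (simp add: sum_negf)
qed



context dsetup begin

lemma inn_prod_zero:
  assumes f: "f holomorphic_on U" and g: "g holomorphic_on U" and j: "j \<in> {1..m}"
  shows "contour_integral (circlepath (c j) (r j)) (\<lambda>z. inn f j z * inn g j z) = 0"
proof -
  define \<rho> where "\<rho> = r j - \<delta>/2"
  have rp: "0 < \<rho>" unfolding \<rho>_def using dlt[OF j] dpos by auto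
  have cf: "continuous_on (sphere (c j) \<rho>) f" unfolding \<rho>_def using cont_U[OF f j] dpos by auto
  have cg: "continuous_on (sphere (c j) \<rho>) g" unfolding \<rho>_def using cont_U[OF g j] dpos by auto
  obtain Cf where Cf: "0 \<le> Cf" "\<And>z. 2*\<rho> \<le> norm (z - c j) \<Longrightarrow> norm (ci (c j) \<rho> f z) \<le> Cf / norm (z - c j)"
    using ci_bound[OF cf rp] by blast
  obtain Cg where Cg: "0 \<le> Cg" "\<And>z. 2*\<rho> \<le> norm (z - c j) \<Longrightarrow> norm (ci (c j) \<rho> g z) \<le> Cg / norm (z - c j)"
    using ci_bound[OF cg rp] by blast
  show ?thesis
  proof (rule decay0[where \<rho>a=\<rho> and C="Cf*Cg" and Ra="2*\<rho>"])
    show "(\<lambda>z. inn f j z * inn g j z) holomorphic_on - cball (c j) \<rho>"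
      unfolding \<rho>_def using inn_holo[OF f j] inn_holo[OF g j] by (intro holomorphic_on_mult)
    show "0 < r j" "\<rho> < r j" "0 \<le> Cf * Cg" using rpos[OF j] dpos Cf Cg unfolding \<rho>_def by auto
    fix z assume z: "2*\<rho> \<le> norm (z - c j)"
    have "norm (inn f j z * inn g j z) = norm (inn f j z) * norm (inn g j z)" by (simp add: norm_mult)
    also have "\<dots> \<le> (Cf / norm (z - c j)) * (Cg / norm (z - c j))"
      using Cf(2)[OF z] Cg(2)[OF z] Cf(1) unfolding inn_def \<rho>_def[symmetric]
      by (intro mult_mono) auto
    also have "\<dots> = Cf * Cg / norm (z - c j)^2" by (simp add: power2_eq_square)
    finally show "norm (inn f j z * inn g j z) \<le> Cf * Cg / norm (z - c j)^2" .
  qed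
qed

lemma ci_cont_other:
  assumes f: "f holomorphic_on U" and j: "j \<in> {1..m}" and s: "s \<in> {1..m}" "s \<noteq> j"
  shows "continuous_on (sphere (c j) (r j)) (ci (c s) (r s) f)"
proof -
  have "ci (c s) (r s) f holomorphic_on (- sphere (c s) (r s))"
    using s by (intro ci_holo cont_U[OF f] rpos) (auto simp: dpos)
  moreover have "sphere (c j) (r j) \<subseteq> - sphere (c s) (r s)"
  proof
    fix x assume "x \<in> sphere (c j) (r j)"
    then have "r s + 3*\<delta> < dist (c s) x" using far[OF j s(1) s(2)] dpos by auto
    then show "x \<in> - sphere (c s) (r s)" using dpos by auto
  qed
  ultimately show ?thesis using holomorphic_on_imp_continuous_on continuous_on_subset by blast
qed

lemma spheres_disj:
  assumes "j \<in> {1..m}" "s \<in> {1..m}" "s \<noteq> j"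
  shows "sphere (c j) (r j) \<inter> sphere (c s) (r s) = {}"
proof -
  have "x \<notin> sphere (c s) (r s)" if "x \<in> sphere (c j) (r j)" for x
  proof -
    have "r s + 3*\<delta> < dist (c s) x" using far[OF assms] that dpos by auto
    then show ?thesis using dpos by auto
  qed
  then show ?thesis by blast
qed

lemma fubini_sum:
  assumes f: "f holomorphic_on U" and g: "g holomorphic_on U"
  shows "(\<Sum>j\<in>{1..m}. contour_integral (circlepath (c j) (r j)) (\<lambda>z. Ej f j z * g z + f z * Ej g j z)) = 0"
proof -
  define A where "A = (\<lambda>j s. contour_integral (circlepath (c j) (r j)) (\<lambda>z. ci (c s) (r s) f z * g z))"
  define B where "B = (\<lambda>j s. contour_integral (circlepath (c j) (r j)) (\<lambda>z. f z * ci (c s) (r s) g z))"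
  have split: "contour_integral (circlepath (c j) (r j)) (\<lambda>z. Ej f j z * g z + f z * Ej g j z)
      = (\<Sum>s\<in>{1..m}-{j}. A j s + B j s)" if j: "j \<in> {1..m}" for j
  proof -
    have "(\<lambda>z. Ej f j z * g z + f z * Ej g j z)
        = (\<lambda>z. \<Sum>s\<in>{1..m}-{j}. ci (c s) (r s) f z * g z + f z * ci (c s) (r s) g z)"
      unfolding Ej_def by (simp add: sum_distrib_left sum_distrib_right sum.distrib)
    moreover have "(\<lambda>z. ci (c s) (r s) f z * g z + f z * ci (c s) (r s) g z)
        contour_integrable_on circlepath (c j) (r j)" if s: "s \<in> {1..m}-{j}" for s
    proof -
      have "continuous_on (sphere (c j) (r j)) (\<lambda>z. ci (c s) (r s) f z * g z + f z * ci (c s) (r s) g z)"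
        using ci_cont_other[OF f j, of s] ci_cont_other[OF g j, of s] s cont_U[OF f j, of "r j"]
          cont_U[OF g j, of "r j"] dpos
        by (intro continuous_on_add continuous_on_mult) auto
      then show ?thesis using pim[OF j] by (simp add: contour_integrable_continuous_circlepath)
    qed
    moreover have "(\<lambda>z. ci (c s) (r s) f z * g z) contour_integrable_on circlepath (c j) (r j)"
      and "(\<lambda>z. f z * ci (c s) (r s) g z) contour_integrable_on circlepath (c j) (r j)"
      if s: "s \<in> {1..m}-{j}" for s
    proof -
      show "(\<lambda>z. ci (c s) (r s) f z * g z) contour_integrable_on circlepath (c j) (r j)"
        using ci_cont_other[OF f j, of s] s cont_U[OF g j, of "r j"] dpos pim[OF j]
        by (simp add: contour_integrable_continuous_circlepath continuous_on_mult)
      show "(\<lambda>z. f z * ci (c s) (r s) g z) contour_integrable_on circlepath (c j) (r j)"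
        using ci_cont_other[OF g j, of s] s cont_U[OF f j, of "r j"] dpos pim[OF j]
        by (simp add: contour_integrable_continuous_circlepath continuous_on_mult)
    qed
    note i12 = this
    ultimately have "contour_integral (circlepath (c j) (r j)) (\<lambda>z. Ej f j z * g z + f z * Ej g j z)
      = (\<Sum>s\<in>{1..m}-{j}. contour_integral (circlepath (c j) (r j)) (\<lambda>z. ci (c s) (r s) f z * g z + f z * ci (c s) (r s) g z))"
      by (simp only: contour_integral_sum[OF finite_Diff[OF finite_atLeastAtMost]])
    also have "\<dots> = (\<Sum>s\<in>{1..m}-{j}. A j s + B j s)"
      unfolding A_def B_def by (intro sum.cong refl contour_integral_add i12)
    finally show ?thesis .
  qed
  have "(\<Sum>j\<in>{1..m}. \<Sum>s\<in>{1..m}-{j}. A j s + B j s) = 0"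
  proof (rule offdiag)
    fix j s assume js: "j \<in> {1..m}" "s \<in> {1..m}" "j \<noteq> s"
    have "A j s = - B s j"
      unfolding A_def B_def
    proof (rule fubini_pair)
      show "continuous_on (sphere (c s) (r s)) f" using cont_U[OF f js(2), of "r s"] dpos by auto
      show "continuous_on (sphere (c j) (r j)) g" using cont_U[OF g js(1), of "r j"] dpos by auto
      show "0 < r j" "0 < r s" using rpos js by auto
      show "sphere (c j) (r j) \<inter> sphere (c s) (r s) = {}" using spheres_disj js by auto
    qed
    then show "B s j = - A j s" by simp
  qed simp
  then show ?thesis using split by simp
qed

end


context dsetup begin

lemma Ej_cont: "f holomorphic_on U \<Longrightarrow> j \<in> {1..m} \<Longrightarrow> continuous_on (sphere (c j) (r j)) (Ej f j)"
proof -
  assume f: "f holomorphic_on U" and j: "j \<in> {1..m}"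
  have "sphere (c j) (r j) \<subseteq> ball (c j) (r j + \<delta>)" using dpos by auto
  then show ?thesis using Ej_holo[OF f j] holomorphic_on_imp_continuous_on continuous_on_subset by blast
qed

lemma minus_j:
  assumes f: "f holomorphic_on U" and g: "g holomorphic_on U" and j: "j \<in> {1..m}"
  shows "contour_integral (circlepath (c j) (r j)) (\<lambda>z. proj_minus m c r f z * proj_minus m c r g z)
     = - kk * contour_integral (circlepath (c j) (r j)) (\<lambda>z. Ej f j z * g z + f z * Ej g j z)"
proof -
  define H where "H = (\<lambda>z. Ej f j z * Ej g j z + Ej f j z * out g j z + out f j z * Ej g j z)"
  define IP where "IP = (\<lambda>z. inn f j z * inn g j z)"
  define X where "X = (\<lambda>z. Ej f j z * g z + f z * Ej g j z)"
  have bsub: "ball (c j) (r j + \<delta>/2) \<subseteq> ball (c j) (r j + \<delta>)" using dpos by auto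
  have hH: "(H has_contour_integral 0) (circlepath (c j) (r j))"
  proof (rule Cauchy_theorem_convex_simple[of _ "ball (c j) (r j + \<delta>/2)"])
    have e1: "Ej f j holomorphic_on ball (c j) (r j + \<delta>/2)"
      using Ej_holo[OF f j] bsub holomorphic_on_subset by blast
    have e2: "Ej g j holomorphic_on ball (c j) (r j + \<delta>/2)"
      using Ej_holo[OF g j] bsub holomorphic_on_subset by blast
    show "H holomorphic_on ball (c j) (r j + \<delta>/2)"
      unfolding H_def using e1 e2 out_holo[OF f j] out_holo[OF g j]
      by (intro holomorphic_on_add holomorphic_on_mult)
    show "path_image (circlepath (c j) (r j)) \<subseteq> ball (c j) (r j + \<delta> / 2)"
      using pim[OF j] sphere_in_ball[OF j] by simp
  qed auto
  have cIP: "continuous_on (sphere (c j) (r j)) IP"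
  proof -
    have "sphere (c j) (r j) \<subseteq> - cball (c j) (r j - \<delta>/2)" using dpos by auto
    then show ?thesis unfolding IP_def using inn_holo[OF f j] inn_holo[OF g j]
      by (intro continuous_on_mult holomorphic_on_imp_continuous_on) (auto intro: holomorphic_on_subset)
  qed
  have hIP: "(IP has_contour_integral 0) (circlepath (c j) (r j))"
  proof -
    have "IP contour_integrable_on circlepath (c j) (r j)"
      using cIP pim[OF j] by (simp add: contour_integrable_continuous_circlepath)
    then show ?thesis using inn_prod_zero[OF f g j] unfolding IP_def
      by (metis has_contour_integral_integral)
  qed
  have hX: "(X has_contour_integral contour_integral (circlepath (c j) (r j)) X) (circlepath (c j) (r j))"
  proof -
    have "continuous_on (sphere (c j) (r j)) X"
      unfolding X_def using Ej_cont[OF f j] Ej_cont[OF g j] cont_U[OF f j, of "r j"] cont_U[OF g j, of "r j"] dpos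
      by (intro continuous_on_add continuous_on_mult) auto
    then show ?thesis using pim[OF j]
      by (intro has_contour_integral_integral) (simp add: contour_integrable_continuous_circlepath)
  qed
  have "((\<lambda>z. kk^2 * H z - kk * X z + kk^2 * IP z) has_contour_integral
      (kk^2 * 0 - kk * contour_integral (circlepath (c j) (r j)) X + kk^2 * 0)) (circlepath (c j) (r j))"
    by (intro has_contour_integral_add has_contour_integral_diff has_contour_integral_lmul hH hX hIP)
  then have "((\<lambda>z. kk^2 * H z - kk * X z + kk^2 * IP z) has_contour_integral
      (- kk * contour_integral (circlepath (c j) (r j)) X)) (circlepath (c j) (r j))" by simp
  then have "((\<lambda>z. proj_minus m c r f z * proj_minus m c r g z) has_contour_integral
      (- kk * contour_integral (circlepath (c j) (r j)) X)) (circlepath (c j) (r j))"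
  proof (rule has_contour_integral_eq)
    fix z assume "z \<in> path_image (circlepath (c j) (r j))"
    then have z: "z \<in> sphere (c j) (r j)" by (simp only: pim[OF j])
    have ef: "f z = kk * (out f j z - inn f j z)" by (rule annulus_formula[OF f j z])
    have eg: "g z = kk * (out g j z - inn g j z)" by (rule annulus_formula[OF g j z])
    show "kk^2 * H z - kk * X z + kk^2 * IP z = proj_minus m c r f z * proj_minus m c r g z"
      unfolding minus_val[OF f j z] minus_val[OF g j z] H_def X_def IP_def ef eg
      by (simp add: algebra_simps power2_eq_square)
  qed
  then show ?thesis unfolding X_def by (rule contour_integral_unique)
qed

lemma cintB:
  assumes f: "f holomorphic_on U" and g: "g holomorphic_on U"
  shows "cint m c r (\<lambda>z. proj_minus m c r f z * proj_minus m c r g z) = 0"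
proof -
  have "cint m c r (\<lambda>z. proj_minus m c r f z * proj_minus m c r g z)
     = kk * (\<Sum>j\<in>{1..m}. - kk * contour_integral (circlepath (c j) (r j)) (\<lambda>z. Ej f j z * g z + f z * Ej g j z))"
    unfolding cint_def kk_def[symmetric] by (simp add: minus_j[OF f g])
  also have "\<dots> = - (kk^2) * (\<Sum>j\<in>{1..m}. contour_integral (circlepath (c j) (r j)) (\<lambda>z. Ej f j z * g z + f z * Ej g j z))"
    by (simp add: sum_distrib_left power2_eq_square mult.assoc)
  also have "\<dots> = 0" using fubini_sum[OF f g] by simp
  finally show ?thesis .
qed

end


context dsetup begin

lemma plus_eq: "proj_plus m c r X z = X z - proj_minus m c r X z"
  unfolding proj_minus_def by simp

lemma main:
  fixes N :: nat
  assumes ha: "a holomorphic_on U" and hah: "ah holomorphic_on U"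
    and h1: "\<omega>1 holomorphic_on U" and h1h: "\<omega>1h holomorphic_on U"
    and h2: "\<omega>2 holomorphic_on U" and h2h: "\<omega>2h holomorphic_on U"
  shows "pairing m c r (\<omega>1, \<omega>1h) (Cop m c r a ah (euler N a ah) (\<omega>2, \<omega>2h)) =
        cint m c r (\<lambda>z.
            proj_plus m c r (\<lambda>p. \<omega>1 p * deriv a p + \<omega>1h p * deriv ah p) z
              * proj_minus m c r (\<lambda>p. a p * \<omega>2 p + ah p * \<omega>2h p) z
          + proj_plus m c r (\<lambda>p. \<omega>2 p * deriv a p + \<omega>2h p * deriv ah p) z
              * proj_minus m c r (\<lambda>p. a p * \<omega>1 p + ah p * \<omega>1h p) z)
      - cint m c r (\<lambda>z. \<omega>1 z * \<omega>2 z * a z * deriv a z + \<omega>1 z * \<omega>2h z * a z * deriv ah z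
                        + \<omega>2 z * \<omega>1h z * a z * deriv ah z + \<omega>1h z * \<omega>2h z * ah z * deriv ah z)
      + 1 / of_nat N * cint m c r (\<lambda>z. deriv a z * \<omega>1 z + deriv ah z * \<omega>1h z)
                         * cint m c r (\<lambda>z. deriv a z * \<omega>2 z + deriv ah z * \<omega>2h z)"
proof -
  have da: "deriv a holomorphic_on U" using ha Uopen by (rule holomorphic_deriv)
  have dah: "deriv ah holomorphic_on U" using hah Uopen by (rule holomorphic_deriv)
  define Q1 where "Q1 = (\<lambda>p. \<omega>1 p * deriv a p + \<omega>1h p * deriv ah p)"
  define Q2 where "Q2 = (\<lambda>p. \<omega>2 p * deriv a p + \<omega>2h p * deriv ah p)"
  define R1 where "R1 = (\<lambda>p. a p * \<omega>1 p + ah p * \<omega>1h p)"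
  define R2 where "R2 = (\<lambda>p. a p * \<omega>2 p + ah p * \<omega>2h p)"
  define T where "T = (\<lambda>z. \<omega>1 z * \<omega>2 z * a z * deriv a z + \<omega>1 z * \<omega>2h z * a z * deriv ah z
                        + \<omega>2 z * \<omega>1h z * a z * deriv ah z + \<omega>1h z * \<omega>2h z * ah z * deriv ah z)"
  define P2 where "P2 = (\<lambda>p. \<omega>2 p * (a p - p / of_nat N * deriv a p) + \<omega>2h p * (ah p - p / of_nat N * deriv ah p))"
  define k where "k = 1 / of_nat N * cint m c r Q2"
  have hQ1: "Q1 holomorphic_on U" unfolding Q1_def using h1 h1h da dah ha hah Uopen by (intro holomorphic_intros)
  have hQ2: "Q2 holomorphic_on U" unfolding Q2_def using h2 h2h da dah ha hah Uopen by (intro holomorphic_intros)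
  have hR1: "R1 holomorphic_on U" unfolding R1_def using h1 h1h ha hah by (intro holomorphic_intros)
  have hR2: "R2 holomorphic_on U" unfolding R2_def using h2 h2h ha hah by (intro holomorphic_intros)
  have hT: "T holomorphic_on U" unfolding T_def using h1 h1h h2 h2h ha hah da dah Uopen by (intro holomorphic_intros)
  have hzQ2: "(\<lambda>p. p * Q2 p) holomorphic_on U" using hQ2 by (intro holomorphic_intros)
  have P2eq: "P2 = (\<lambda>p. R2 p - (1 / of_nat N) * (p * Q2 p))"
    unfolding P2_def R2_def Q2_def by (rule ext) (simp add: divide_inverse algebra_simps)
  have lhs: "pairing m c r (\<omega>1, \<omega>1h) (Cop m c r a ah (euler N a ah) (\<omega>2, \<omega>2h)) =
     cint m c r (\<lambda>z. \<omega>1 z * (deriv a z * proj_minus m c r P2 z - (a z - z / of_nat N * deriv a z) * proj_minus m c r Q2 z)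
        + \<omega>1h z * (- deriv ah z * proj_plus m c r P2 z + (ah z - z / of_nat N * deriv ah z) * proj_plus m c r Q2 z))"
    unfolding pairing_def Cop_def euler_def Let_def P2_def Q2_def by simp
  have pt: "\<omega>1 z * (deriv a z * proj_minus m c r P2 z - (a z - z / of_nat N * deriv a z) * proj_minus m c r Q2 z)
        + \<omega>1h z * (- deriv ah z * proj_plus m c r P2 z + (ah z - z / of_nat N * deriv ah z) * proj_plus m c r Q2 z)
      = ((proj_plus m c r Q1 z * proj_minus m c r R2 z + proj_plus m c r Q2 z * proj_minus m c r R1 z) - T z
        + proj_minus m c r Q1 z * proj_minus m c r R2 z) + proj_plus m c r Q2 z * proj_plus m c r R1 z + k * Q1 z"
    if j: "j \<in> {1..m}" and z: "z \<in> sphere (c j) (r j)" for j z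
  proof -
    have pm: "proj_minus m c r P2 z = proj_minus m c r R2 z - (1 / of_nat N) * (z * proj_minus m c r Q2 z - cint m c r Q2)"
      unfolding P2eq minus_lin[OF hR2 hzQ2 j z] minus_mulz[OF hQ2 j z] ..
    show ?thesis
      unfolding plus_eq[of P2] plus_eq[of Q1] plus_eq[of Q2] plus_eq[of R1] pm k_def
      unfolding P2eq Q1_def Q2_def R1_def R2_def T_def
      by (simp add: divide_inverse algebra_simps)
  qed
  have csQ1: "cs Q1" and csT: "cs T" using cs_U hQ1 hT by auto
  have csS: "cs (\<lambda>z. proj_plus m c r Q1 z * proj_minus m c r R2 z + proj_plus m c r Q2 z * proj_minus m c r R1 z)"
    using cs_plus[OF hQ1] cs_plus[OF hQ2] cs_minus[OF hR1] cs_minus[OF hR2] by (intro cs_add cs_mult)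
  have csM: "cs (\<lambda>z. proj_minus m c r Q1 z * proj_minus m c r R2 z)"
    using cs_minus[OF hQ1] cs_minus[OF hR2] by (intro cs_mult)
  have csP: "cs (\<lambda>z. proj_plus m c r Q2 z * proj_plus m c r R1 z)"
    using cs_plus[OF hQ2] cs_plus[OF hR1] by (intro cs_mult)
  have "pairing m c r (\<omega>1, \<omega>1h) (Cop m c r a ah (euler N a ah) (\<omega>2, \<omega>2h))
     = cint m c r (\<lambda>z. ((proj_plus m c r Q1 z * proj_minus m c r R2 z + proj_plus m c r Q2 z * proj_minus m c r R1 z) - T z
        + proj_minus m c r Q1 z * proj_minus m c r R2 z) + proj_plus m c r Q2 z * proj_plus m c r R1 z + k * Q1 z)"
    unfolding lhs by (rule cint_cong) (rule pt)
  also have "\<dots> = ((cint m c r (\<lambda>z. proj_plus m c r Q1 z * proj_minus m c r R2 z + proj_plus m c r Q2 z * proj_minus m c r R1 z)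
      - cint m c r T + cint m c r (\<lambda>z. proj_minus m c r Q1 z * proj_minus m c r R2 z))
      + cint m c r (\<lambda>z. proj_plus m c r Q2 z * proj_plus m c r R1 z)) + k * cint m c r Q1"
    using csQ1 csT csS csM csP
    by (simp add: cint_add cint_diff cint_lmul cs_add cs_diff cs_mult cs_const)
  also have "\<dots> = cint m c r (\<lambda>z. proj_plus m c r Q1 z * proj_minus m c r R2 z + proj_plus m c r Q2 z * proj_minus m c r R1 z)
      - cint m c r T + k * cint m c r Q1"
    using cintA[OF hQ2 hR1] cintB[OF hQ1 hR2] by simp
  also have "cint m c r Q1 = cint m c r (\<lambda>z. deriv a z * \<omega>1 z + deriv ah z * \<omega>1h z)"
    unfolding Q1_def by (simp add: mult.commute)
  finally have X: "pairing m c r (\<omega>1, \<omega>1h) (Cop m c r a ah (euler N a ah) (\<omega>2, \<omega>2h)) =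
    cint m c r (\<lambda>z. proj_plus m c r Q1 z * proj_minus m c r R2 z + proj_plus m c r Q2 z * proj_minus m c r R1 z)
      - cint m c r T + k * cint m c r (\<lambda>z. deriv a z * \<omega>1 z + deriv ah z * \<omega>1h z)" .
  have Y: "cint m c r Q2 = cint m c r (\<lambda>z. deriv a z * \<omega>2 z + deriv ah z * \<omega>2h z)"
    unfolding Q2_def by (simp add: mult.commute)
  show ?thesis unfolding X k_def Y unfolding Q1_def Q2_def R1_def R2_def T_def by (simp add: mult.commute mult.left_commute)
qed

end


lemma sep_dist:
  fixes ci cj :: complex
  assumes "0 < ri" "0 < rj" "cball ci ri \<inter> cball cj rj = {}"
  shows "ri + rj < dist ci cj"
proof (rule ccontr)
  assume "\<not> ri + rj < dist ci cj"
  then have d: "dist ci cj \<le> ri + rj" by simp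
  define t where "t = ri / (ri + rj)"
  have t: "0 \<le> t" "t \<le> 1" "1 - t = rj / (ri + rj)" using assms unfolding t_def by (auto simp: field_simps)
  define x where "x = ci + of_real t * (cj - ci)"
  have "dist ci x = t * dist ci cj"
    unfolding x_def dist_norm using t by (simp add: norm_mult norm_minus_commute)
  also have "\<dots> \<le> t * (ri + rj)" using d t by (intro mult_left_mono) auto
  also have "\<dots> = ri" unfolding t_def using assms by simp
  finally have x1: "x \<in> cball ci ri" by simp
  have ex: "cj - x = of_real (1 - t) * (cj - ci)" unfolding x_def by (simp add: algebra_simps)
  have "dist cj x = norm (of_real (1 - t) * (cj - ci))" unfolding dist_norm ex ..
  also have "\<dots> = \<bar>1 - t\<bar> * dist ci cj" by (simp only: norm_mult norm_of_real) (simp add: dist_norm norm_minus_commute)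
  also have "\<dots> = (1 - t) * dist ci cj" using t(2) by simp
  finally have "dist cj x = (1 - t) * dist ci cj" .
  also have "\<dots> \<le> (1 - t) * (ri + rj)" using d t by (intro mult_left_mono) auto
  also have "\<dots> = rj" unfolding t(3) using assms by simp
  finally have x2: "x \<in> cball cj rj" by simp
  show False using x1 x2 assms(3) by blast
qed

lemma exists_setup:
  assumes rpos: "\<forall>j\<in>{1..m}. r j > 0"
    and disj: "\<forall>i\<in>{1..m}. \<forall>j\<in>{1..m}. i \<noteq> j \<longrightarrow> cball (c i) (r i) \<inter> cball (c j) (r j) = {}"
    and U: "open U" "circles m c r \<subseteq> U"
  shows "\<exists>\<delta>. dsetup m c r U \<delta>"
proof -
  have "compact (circles m c r)" unfolding circles_def by (intro compact_UN) auto
  then obtain e where e: "e > 0" "(\<Union>x\<in>circles m c r. ball x e) \<subseteq> U"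
    using compact_subset_open_imp_ball_epsilon_subset U by blast
  define D where "D = (\<lambda>(i,j). (dist (c i) (c j) - r i - r j) / 5) ` {(i,j). i \<in> {1..m} \<and> j \<in> {1..m} \<and> i \<noteq> j}"
  define \<delta>1 where "\<delta>1 = Min (insert 1 D)"
  define \<delta>2 where "\<delta>2 = Min (insert 1 (r ` {1..m}))"
  have finD: "finite D" unfolding D_def
    by (rule finite_imageI) (rule finite_subset[of _ "{1..m} \<times> {1..m}"], auto)
  have Dpos: "\<forall>x\<in>D. 0 < x"
  proof
    fix x assume "x \<in> D"
    then obtain i j where ij: "i \<in> {1..m}" "j \<in> {1..m}" "i \<noteq> j" "x = (dist (c i) (c j) - r i - r j) / 5"
      unfolding D_def by auto
    have "r i + r j < dist (c i) (c j)"
      using sep_dist[of "r i" "r j" "c i" "c j"] rpos disj ij by auto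
    then show "0 < x" using ij by simp
  qed
  have d1: "0 < \<delta>1" unfolding \<delta>1_def using finD Dpos by (subst Min_gr_iff) auto
  have d2: "0 < \<delta>2" unfolding \<delta>2_def using rpos by (subst Min_gr_iff) auto
  define \<delta> where "\<delta> = min e (min \<delta>1 (\<delta>2/2))"
  have dp: "0 < \<delta>" unfolding \<delta>_def using e d1 d2 by auto
  show ?thesis
  proof (intro exI[of _ \<delta>] dsetup.intro)
    show "\<And>j. j \<in> {1..m} \<Longrightarrow> 0 < r j" using rpos by auto
    show "0 < \<delta>" by (rule dp)
    show "open U" by (rule U(1))
    fix j assume j: "j \<in> {1..m}"
    have "\<delta>2 \<le> r j" unfolding \<delta>2_def using j by (intro Min_le) auto
    then show "\<delta> < r j" unfolding \<delta>_def using d2 by linarith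
    fix z assume z1: "r j - \<delta> < dist (c j) z" and z2: "dist (c j) z < r j + \<delta>"
    define d where "d = dist (c j) z"
    have dpos: "0 < d" unfolding d_def using z1 \<open>\<delta> < r j\<close> by linarith
    define y where "y = c j + of_real (r j / d) * (z - c j)"
    have ey: "y - c j = of_real (r j / d) * (z - c j)" unfolding y_def by simp
    have "dist (c j) y = norm (y - c j)" by (simp add: dist_norm norm_minus_commute)
    also have "\<dots> = norm (of_real (r j / d) * (z - c j))" unfolding ey ..
    also have "\<dots> = \<bar>r j / d\<bar> * d" by (simp only: norm_mult norm_of_real) (simp add: d_def dist_norm norm_minus_commute)
    also have "\<dots> = r j / d * d" using rpos j dpos by (simp add: abs_of_pos)
    finally have "dist (c j) y = r j / d * d" .
    then have yS: "y \<in> circles m c r" unfolding circles_def using dpos j by auto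
    have ez: "z - y = of_real (1 - r j / d) * (z - c j)" unfolding y_def by (simp add: algebra_simps)
    have "dist y z = norm (z - y)" by (simp add: dist_norm norm_minus_commute)
    also have "\<dots> = norm (of_real (1 - r j / d) * (z - c j))" unfolding ez ..
    also have "\<dots> = \<bar>1 - r j / d\<bar> * d" by (simp only: norm_mult norm_of_real) (simp add: d_def dist_norm norm_minus_commute)
    finally have "dist y z = \<bar>1 - r j / d\<bar> * d" .
    also have "\<dots> = \<bar>(1 - r j / d) * d\<bar>" using dpos by (simp add: abs_mult)
    also have "\<dots> = \<bar>d - r j\<bar>" using dpos by (simp add: left_diff_distrib)
    also have "\<dots> < e" using z1 z2 unfolding d_def \<delta>_def by auto
    finally have "z \<in> ball y e" by simp
    then show "z \<in> U" using e yS by blast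
  next
    fix i j assume i: "i \<in> {1..m}" and j: "j \<in> {1..m}" and ij: "i \<noteq> j"
    have "(dist (c i) (c j) - r i - r j) / 5 \<in> D" unfolding D_def using i j ij by auto
    then have "\<delta>1 \<le> (dist (c i) (c j) - r i - r j) / 5" unfolding \<delta>1_def using finD by (intro Min_le) auto
    moreover have "0 < (dist (c i) (c j) - r i - r j) / 5" using Dpos \<open>_ \<in> D\<close> by blast
    moreover have "\<delta> \<le> \<delta>1" unfolding \<delta>_def by simp
    ultimately have "4 * \<delta> < dist (c i) (c j) - r i - r j" by (simp add: field_simps)
    then show "r i + r j + 4 * \<delta> < dist (c i) (c j)" by linarith
  qed
qed


theorem proposition2p16:
  fixes m :: nat and n :: "nat \<Rightarrow> nat" and d :: "nat \<Rightarrow> int"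
    and c :: "nat \<Rightarrow> complex" and r :: "nat \<Rightarrow> real"
    and a ah \<omega>1 \<omega>1h \<omega>2 \<omega>2h :: "complex \<Rightarrow> complex"
  assumes "m \<ge> 1"
    and "\<forall>i\<le>m. n i > 0"
    and "\<forall>j\<in>{1..m}. d j \<noteq> 0"
    and "\<forall>j\<in>{1..m}. r j > 0"
    and "\<forall>i\<in>{1..m}. \<forall>j\<in>{1..m}. i \<noteq> j \<longrightarrow> cball (c i) (r i) \<inter> cball (c j) (r j) = {}"
    and "inM m n d c r a ah"
    and "inH m c r \<omega>1" and "inH m c r \<omega>1h" and "inH m c r \<omega>2" and "inH m c r \<omega>2h"
  shows "gform m n c r a ah (\<omega>1, \<omega>1h) (\<omega>2, \<omega>2h) = gform m n c r a ah (\<omega>2, \<omega>2h) (\<omega>1, \<omega>1h)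
    \<and> gform m n c r a ah (\<omega>1, \<omega>1h) (\<omega>2, \<omega>2h) =
        cint m c r (\<lambda>z.
            proj_plus m c r (\<lambda>p. \<omega>1 p * deriv a p + \<omega>1h p * deriv ah p) z
              * proj_minus m c r (\<lambda>p. a p * \<omega>2 p + ah p * \<omega>2h p) z
          + proj_plus m c r (\<lambda>p. \<omega>2 p * deriv a p + \<omega>2h p * deriv ah p) z
              * proj_minus m c r (\<lambda>p. a p * \<omega>1 p + ah p * \<omega>1h p) z)
      - cint m c r (\<lambda>z. \<omega>1 z * \<omega>2 z * a z * deriv a z + \<omega>1 z * \<omega>2h z * a z * deriv ah z
                        + \<omega>2 z * \<omega>1h z * a z * deriv ah z + \<omega>1h z * \<omega>2h z * ah z * deriv ah z)
      + 1 / of_nat (n 0) * cint m c r (\<lambda>z. deriv a z * \<omega>1 z + deriv ah z * \<omega>1h z)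
                         * cint m c r (\<lambda>z. deriv a z * \<omega>2 z + deriv ah z * \<omega>2h z)"
proof -
  note disj = assms(5)
  have M1: "\<exists>U. open U \<and> - int_disks m c r \<subseteq> U \<and> a holomorphic_on U"
    using assms(6) unfolding inM_def by (rule conjunct1)
  have M3: "\<exists>\<phi> :: nat \<Rightarrow> complex.
        (\<forall>j\<in>{1..m}. \<phi> j \<in> ball (c j) (r j)) \<and>
        (\<exists>U. open U \<and> (\<Union>j\<in>{1..m}. cball (c j) (r j)) \<subseteq> U \<and> ah holomorphic_on (U - \<phi> ` {1..m})) \<and>
        (\<forall>j\<in>{1..m}. is_pole ah (\<phi> j) \<and> zorder ah (\<phi> j) = - int (n j))"
    using assms(6) unfolding inM_def by (rule conjunct1[OF conjunct2[OF conjunct2]])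
  obtain Ua where Ua: "open Ua" "- int_disks m c r \<subseteq> Ua" "a holomorphic_on Ua"
    using M1 by blast
  obtain \<phi> :: "nat \<Rightarrow> complex" and Uh where \<phi>: "\<forall>j\<in>{1..m}. \<phi> j \<in> ball (c j) (r j)"
    and Uh: "open Uh" "(\<Union>j\<in>{1..m}. cball (c j) (r j)) \<subseteq> Uh" "ah holomorphic_on (Uh - \<phi> ` {1..m})"
    using M3 by blast
  obtain U1 where U1: "open U1" "circles m c r \<subseteq> U1" "\<omega>1 holomorphic_on U1" using assms(7) unfolding inH_def by blast
  obtain U2 where U2: "open U2" "circles m c r \<subseteq> U2" "\<omega>1h holomorphic_on U2" using assms(8) unfolding inH_def by blast
  obtain U3 where U3: "open U3" "circles m c r \<subseteq> U3" "\<omega>2 holomorphic_on U3" using assms(9) unfolding inH_def by blast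
  obtain U4 where U4: "open U4" "circles m c r \<subseteq> U4" "\<omega>2h holomorphic_on U4" using assms(10) unfolding inH_def by blast
  define U where "U = Ua \<inter> (Uh - \<phi> ` {1..m}) \<inter> U1 \<inter> U2 \<inter> U3 \<inter> U4"
  have oU: "open U" unfolding U_def
    using Ua(1) Uh(1) U1(1) U2(1) U3(1) U4(1)
    by (intro open_Int open_Diff finite_imp_closed finite_imageI finite_atLeastAtMost) auto
  have circ: "circles m c r \<subseteq> U"
  proof
    fix z assume zc: "z \<in> circles m c r"
    then obtain j where j: "j \<in> {1..m}" "z \<in> sphere (c j) (r j)" unfolding circles_def by auto
    have nb: "z \<notin> ball (c s) (r s)" if s: "s \<in> {1..m}" for s
    proof
      assume zs: "z \<in> ball (c s) (r s)"
      show False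
      proof (cases "s = j")
        case True then show ?thesis using zs j by auto
      next
        case False
        then have "cball (c s) (r s) \<inter> cball (c j) (r j) = {}" using disj s j by auto
        moreover have "z \<in> cball (c s) (r s)" using zs by auto
        moreover have "z \<in> cball (c j) (r j)" using j by auto
        ultimately show ?thesis by blast
      qed
    qed
    have "z \<notin> int_disks m c r" unfolding int_disks_def using nb by auto
    then have "z \<in> Ua" using Ua(2) by auto
    moreover have "z \<in> cball (c j) (r j)" using j by auto
    then have "z \<in> Uh" using Uh(2) j by blast
    moreover have "z \<notin> \<phi> ` {1..m}"
    proof
      assume "z \<in> \<phi> ` {1..m}"
      then obtain s where s: "s \<in> {1..m}" "z = \<phi> s" by blast
      then have "z \<in> ball (c s) (r s)" using \<phi> by blast
      then show False using nb[OF s(1)] by blast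
    qed
    ultimately show "z \<in> U" unfolding U_def using zc U1(2) U2(2) U3(2) U4(2) by auto
  qed
  obtain \<delta> where "dsetup m c r U \<delta>" using exists_setup[OF assms(4) disj oU circ] by blast
  then interpret dsetup m c r U \<delta> .
  have ha: "a holomorphic_on U" using Ua(3) by (rule holomorphic_on_subset) (unfold U_def, blast)
  have hah: "ah holomorphic_on U" using Uh(3) by (rule holomorphic_on_subset) (unfold U_def, blast)
  have h1: "\<omega>1 holomorphic_on U" using U1(3) by (rule holomorphic_on_subset) (unfold U_def, blast)
  have h1h: "\<omega>1h holomorphic_on U" using U2(3) by (rule holomorphic_on_subset) (unfold U_def, blast)
  have h2: "\<omega>2 holomorphic_on U" using U3(3) by (rule holomorphic_on_subset) (unfold U_def, blast)
  have h2h: "\<omega>2h holomorphic_on U" using U4(3) by (rule holomorphic_on_subset) (unfold U_def, blast)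
  note e1 = main[OF ha hah h1 h1h h2 h2h, of "n 0"]
  note e2 = main[OF ha hah h2 h2h h1 h1h, of "n 0"]
  have s1: "(\<lambda>z. proj_plus m c r (\<lambda>p. \<omega>1 p * deriv a p + \<omega>1h p * deriv ah p) z
              * proj_minus m c r (\<lambda>p. a p * \<omega>2 p + ah p * \<omega>2h p) z
          + proj_plus m c r (\<lambda>p. \<omega>2 p * deriv a p + \<omega>2h p * deriv ah p) z
              * proj_minus m c r (\<lambda>p. a p * \<omega>1 p + ah p * \<omega>1h p) z)
      = (\<lambda>z. proj_plus m c r (\<lambda>p. \<omega>2 p * deriv a p + \<omega>2h p * deriv ah p) z
              * proj_minus m c r (\<lambda>p. a p * \<omega>1 p + ah p * \<omega>1h p) z
          + proj_plus m c r (\<lambda>p. \<omega>1 p * deriv a p + \<omega>1h p * deriv ah p) z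
              * proj_minus m c r (\<lambda>p. a p * \<omega>2 p + ah p * \<omega>2h p) z)"
    by (rule ext) (rule add.commute)
  have s2: "(\<lambda>z. \<omega>1 z * \<omega>2 z * a z * deriv a z + \<omega>1 z * \<omega>2h z * a z * deriv ah z
                        + \<omega>2 z * \<omega>1h z * a z * deriv ah z + \<omega>1h z * \<omega>2h z * ah z * deriv ah z)
     = (\<lambda>z. \<omega>2 z * \<omega>1 z * a z * deriv a z + \<omega>2 z * \<omega>1h z * a z * deriv ah z
                        + \<omega>1 z * \<omega>2h z * a z * deriv ah z + \<omega>2h z * \<omega>1h z * ah z * deriv ah z)"
    by (rule ext) (simp add: algebra_simps)
  have sym: "gform m n c r a ah (\<omega>1, \<omega>1h) (\<omega>2, \<omega>2h) = gform m n c r a ah (\<omega>2, \<omega>2h) (\<omega>1, \<omega>1h)"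
    unfolding gform_def e1 e2 s1 s2 by (simp only: mult.commute mult.assoc mult.left_commute)
  show ?thesis using sym e1 unfolding gform_def by simp
qed

end
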